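(* Let $[x,y;z]$ be a geodesic of weight $w$ with complementary weight $w'$. Then $\rho([x,y;z])$ is a geodesic if and only if $G$ contains the $R$-linear map $\sigma:U\to U$ defined by $\sigma(x)=-y$ and $\sigma(z)=z-w'y$.
   Context: Let $R$ be a commutative ring, $U$ a free rank-$2$ $R$-module with non-degenerate symplectic pairing $\langle,\rangle$, $C$ an $R$-linear involution of $U$ of determinant $-1$, and $G\subseteq\mathrm{SL}(U)$ a subgroup containing $-1$ and stable under $g\mapsto CgC$. A basis vector is an element generating a direct summand. Let $\mathscr T$ be the set of triples $[x,y;z]$ of basis vectors with $\langle x,z\rangle=\langle z,y\rangle=1$ and $x+y=wz$ for some $w\in\{1,2\}$ (the weight); the complementary weight is $w'=3-w$. Define $\rho([x,y;z])=[z,z-w'x;y]\in\mathscr T$. A triple satisfies condition (c) if there is $g\in G$ with $Cg-1=w'\langle -,x\rangle y$ and $Cg+1=w'\langle -,y\rangle x$, where $\langle -,x\rangle y$ denotes $u\mapsto\langle u,x\rangle y$; this condition is invariant under $\rho^2$. A geodesic is a class in $\mathscr T/\langle\rho^2\rangle$ satisfying (c), and $\rho$ induces a map on $\mathscr T/\langle\rho^2\rangle$. *)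

theory Defs
  imports Main
begin

text \<open>U is modelled as R x R (a free rank-2 R-module with a chosen basis);
  R is a type of class comm_ring_1.  Endomorphisms are HOL functions U => U.\<close>

type_synonym 'a vec = "'a \<times> 'a"

definition vadd :: "'a::comm_ring_1 vec \<Rightarrow> 'a vec \<Rightarrow> 'a vec" where
  "vadd u v = (fst u + fst v, snd u + snd v)"

definition vsub :: "'a::comm_ring_1 vec \<Rightarrow> 'a vec \<Rightarrow> 'a vec" where
  "vsub u v = (fst u - fst v, snd u - snd v)"

definition vneg :: "'a::comm_ring_1 vec \<Rightarrow> 'a vec" where
  "vneg u = (- fst u, - snd u)"

definition sc :: "'a::comm_ring_1 \<Rightarrow> 'a vec \<Rightarrow> 'a vec" where
  "sc r u = (r * fst u, r * snd u)"

definition lin :: "('a::comm_ring_1 vec \<Rightarrow> 'a vec) \<Rightarrow> bool" where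
  "lin f \<longleftrightarrow> (\<forall>r u v. f (vadd (sc r u) v) = vadd (sc r (f u)) (f v))"

definition det2 :: "('a::comm_ring_1 vec \<Rightarrow> 'a vec) \<Rightarrow> 'a" where
  "det2 f = fst (f (1,0)) * snd (f (0,1)) - snd (f (1,0)) * fst (f (0,1))"

definition SL :: "('a::comm_ring_1 vec \<Rightarrow> 'a vec) set" where
  "SL = {f. lin f \<and> det2 f = 1}"

definition is_subgroup :: "('a::comm_ring_1 vec \<Rightarrow> 'a vec) set \<Rightarrow> bool" where
  "is_subgroup G \<longleftrightarrow> id \<in> G \<and> (\<forall>f\<in>G. \<forall>g\<in>G. f \<circ> g \<in> G) \<and> (\<forall>g\<in>G. inv g \<in> G)"

text \<open>Non-degenerate symplectic (alternating bilinear) pairing: bilinear, alternating,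
  and u \<mapsto> <u,-> is a bijection from U onto its dual (every linear form
  v \<mapsto> a v1 + b v2 is represented by a unique u).\<close>
definition symplectic :: "('a::comm_ring_1 vec \<Rightarrow> 'a vec \<Rightarrow> 'a) \<Rightarrow> bool" where
  "symplectic B \<longleftrightarrow>
     (\<forall>r u v w. B (vadd (sc r u) v) w = r * B u w + B v w) \<and>
     (\<forall>r u v w. B w (vadd (sc r u) v) = r * B w u + B w v) \<and>
     (\<forall>u. B u u = 0) \<and>
     (\<forall>a b. \<exists>!u. \<forall>v. B u v = a * fst v + b * snd v)"

definition submodule :: "'a::comm_ring_1 vec set \<Rightarrow> bool" where
  "submodule N \<longleftrightarrow> (0,0) \<in> N \<and> (\<forall>u\<in>N. \<forall>v\<in>N. vadd u v \<in> N) \<and> (\<forall>r. \<forall>u\<in>N. sc r u \<in> N)"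

text \<open>A basis vector: x generates a direct summand R x of U, i.e. U = R x \<oplus> N.\<close>
definition basis_vec :: "'a::comm_ring_1 vec \<Rightarrow> bool" where
  "basis_vec x \<longleftrightarrow> (\<exists>N. submodule N \<and> (\<forall>u. \<exists>r n. n \<in> N \<and> u = vadd (sc r x) n)
                          \<and> (\<forall>r. sc r x \<in> N \<longrightarrow> sc r x = (0,0)))"

text \<open>Triples [x,y;z] together with their weight w: (x, y, z, w).\<close>
type_synonym 'a triple = "'a vec \<times> 'a vec \<times> 'a vec \<times> nat"

definition in_T :: "('a::comm_ring_1 vec \<Rightarrow> 'a vec \<Rightarrow> 'a) \<Rightarrow> 'a triple \<Rightarrow> bool" where
  "in_T B t = (case t of (x, y, z, w) \<Rightarrow>
     basis_vec x \<and> basis_vec y \<and> basis_vec z \<and> B x z = 1 \<and> B z y = 1 \<and>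
     w \<in> {1, 2} \<and> vadd x y = sc (of_nat w) z)"

definition rho :: "'a::comm_ring_1 triple \<Rightarrow> 'a triple" where
  "rho t = (case t of (x, y, z, w) \<Rightarrow> (z, vsub z (sc (of_nat (3 - w)) x), y, 3 - w))"

text \<open>Condition (c), with w' = 3 - w the complementary weight and Cg = C o g.\<close>
definition cond_c :: "('a::comm_ring_1 vec \<Rightarrow> 'a vec \<Rightarrow> 'a) \<Rightarrow> ('a vec \<Rightarrow> 'a vec)
      \<Rightarrow> ('a vec \<Rightarrow> 'a vec) set \<Rightarrow> 'a triple \<Rightarrow> bool" where
  "cond_c B C G t = (case t of (x, y, z, w) \<Rightarrow>
     (\<exists>g\<in>G. \<forall>u. vsub (C (g u)) u = sc (of_nat (3 - w) * B u x) y \<and>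
                 vadd (C (g u)) u = sc (of_nat (3 - w) * B u y) x))"

text \<open>A triple represents a geodesic iff it lies in T and satisfies (c)
  ((c) is invariant under rho^2, so this is a property of the class).\<close>
definition geodesic :: "('a::comm_ring_1 vec \<Rightarrow> 'a vec \<Rightarrow> 'a) \<Rightarrow> ('a vec \<Rightarrow> 'a vec)
      \<Rightarrow> ('a vec \<Rightarrow> 'a vec) set \<Rightarrow> 'a triple \<Rightarrow> bool" where
  "geodesic B C G t \<longleftrightarrow> in_T B t \<and> cond_c B C G t"

end

theory Submission
  imports Defs
begin
lemma vec_decomp: "u = vadd (sc (fst u) (1,0)) (sc (snd u) (0,1))"
  by (simp add: vadd_def sc_def)

lemma sym_coord:
  assumes "symplectic B"
  shows "\<exists>c. (\<forall>u v. B u v = c * (fst u * snd v - snd u * fst v)) \<and> (\<exists>e. c*e = 1)"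
proof -
  have L: "\<And>r u v w. B (vadd (sc r u) v) w = r * B u w + B v w"
   and R: "\<And>r u v w. B w (vadd (sc r u) v) = r * B w u + B w v"
   and A: "\<And>u. B u u = 0"
   and N: "\<And>a b. \<exists>!u. \<forall>v. B u v = a * fst v + b * snd v"
    using assms unfolding symplectic_def by blast+
  have z0: "vadd (sc 1 (0,0)) (0,0) = (0,0)" by (simp add: vadd_def sc_def)
  have L0: "B (0,0) w = 0" for w
  proof -
    have "B (0,0) w = 1*B (0,0) w + B (0,0) w" using L[of 1 "(0,0)" "(0,0)" w] by (metis z0)
    thus ?thesis by simp
  qed
  have R0: "B w (0,0) = 0" for w
  proof -
    have "B w (0,0) = 1*B w (0,0) + B w (0,0)" using R[of w 1 "(0,0)" "(0,0)"] by (metis z0)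
    thus ?thesis by simp
  qed
  have s0: "vadd (sc s u) (0,0) = sc s u" for s u by (simp add: vadd_def sc_def)
  have Ls: "B (sc s u) w = s * B u w" for s u w
    using L[of s u "(0,0)" w] L0 by (metis s0 add_0_right)
  have Rs: "B w (sc s u) = s * B w u" for s u w
    using R[of w s u "(0,0)"] R0 by (metis s0 add_0_right)
  have BL: "B u v = fst u * B (1,0) v + snd u * B (0,1) v" for u v
    using L[of "fst u" "(1,0)" "sc (snd u) (0,1)" v] Ls vec_decomp[of u] by simp
  have BR: "B w v = fst v * B w (1,0) + snd v * B w (0,1)" for w v
    using R[of w "fst v" "(1,0)" "sc (snd v) (0,1)"] Rs vec_decomp[of v] by simp
  define c where "c = B (1,0) (0,1)"
  have e11: "B (1,0) (1,0) = 0" and e22: "B (0,1) (0,1) = 0" using A by auto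
  have "B (1,1) (1,1) = 0" using A by auto
  hence e21: "B (0,1) (1,0) = - c"
    using BL[of "(1,1)" "(1,1)"] BR[of "(1,0)" "(1,1)"] BR[of "(0,1)" "(1,1)"] e11 e22
    unfolding c_def by (simp add: algebra_simps eq_neg_iff_add_eq_0)
  have form: "B u v = c * (fst u * snd v - snd u * fst v)" for u v
    using BL[of u v] BR[of "(1,0)" v] BR[of "(0,1)" v] e11 e22 e21 unfolding c_def
    by (simp add: algebra_simps)
  obtain u where u: "\<forall>v. B u v = 0 * fst v + 1 * snd v" using N[of 0 1] by blast
  have "B u (0,1) = 1" using u by simp
  hence "c * fst u = 1" using form[of u "(0,1)"] by simp
  thus ?thesis using form by blast
qed

lemma lin_zero: "lin f \<Longrightarrow> f (0,0) = (0,0)"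
proof -
  assume "lin f"
  hence "f (vadd (sc 1 (0,0)) (0,0)) = vadd (sc 1 (f (0,0))) (f (0,0))" unfolding lin_def by blast
  thus ?thesis by (cases "f (0,0)") (simp add: vadd_def sc_def)
qed

lemma lin_decomp:
  assumes "lin f" "u = vadd (sc r a) (sc s b)"
  shows "f u = vadd (sc r (f a)) (sc s (f b))"
proof -
  have s0: "vadd (sc s u) (0,0) = sc s u" for s u by (simp add: vadd_def sc_def)
  have "f (sc s b) = sc s (f b)"
    using assms(1) lin_zero[OF assms(1)] unfolding lin_def
    by (metis s0)
  thus ?thesis using assms(1)[unfolded lin_def, rule_format, of r a "sc s b"] assms(2) by simp
qed
lemma basis_from_pair:
  assumes Bf: "\<And>u v. B u v = c * (fst u * snd v - snd u * fst v)"
    and h: "B v b = 1"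
  shows "basis_vec v"
proof -
  define N where "N = {sc s b | s. True}"
  have "submodule N" unfolding submodule_def N_def
  proof (intro conjI ballI allI)
    show "(0,0) \<in> {sc s b |s. True}" by (rule CollectI, rule exI[of _ 0]) (simp add: sc_def)
  next
    fix u v assume "u \<in> {sc s b |s. True}" "v \<in> {sc s b |s. True}"
    then obtain s t where "u = sc s b" "v = sc t b" by blast
    thus "vadd u v \<in> {sc s b |s. True}"
      by (intro CollectI exI[of _ "s+t"]) (simp add: sc_def vadd_def algebra_simps)
  next
    fix r u assume "u \<in> {sc s b |s. True}"
    then obtain s where "u = sc s b" by blast
    thus "sc r u \<in> {sc s b |s. True}"
      by (intro CollectI exI[of _ "r*s"]) (simp add: sc_def algebra_simps)
  qed
  moreover have "\<exists>r n. n \<in> N \<and> u = vadd (sc r v) n" for u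
  proof (intro exI conjI)
    show "sc (- B u v) b \<in> N" unfolding N_def by blast
    have hc: "c * (fst v * snd b - snd v * fst b) = 1" using h Bf by simp
    show "u = vadd (sc (B u b) v) (sc (- B u v) b)"
    proof (cases u, cases v, cases b)
      fix u1 u2 v1 v2 b1 b2 assume e: "u = (u1,u2)" "v = (v1,v2)" "b = (b1,b2)"
      have hc': "c * (v1 * b2 - v2 * b1) = 1" using hc e by simp
      have "u1 = u1 * (c * (v1 * b2 - v2 * b1))" using hc' by simp
      also have "\<dots> = c * (u1 * b2 - u2 * b1) * v1 - c * (u1 * v2 - u2 * v1) * b1"
        by (simp add: algebra_simps)
      finally have 1: "u1 = c * (u1 * b2 - u2 * b1) * v1 - c * (u1 * v2 - u2 * v1) * b1" .
      have "u2 = u2 * (c * (v1 * b2 - v2 * b1))" using hc' by simp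
      also have "\<dots> = c * (u1 * b2 - u2 * b1) * v2 - c * (u1 * v2 - u2 * v1) * b2"
        by (simp add: algebra_simps)
      finally have 2: "u2 = c * (u1 * b2 - u2 * b1) * v2 - c * (u1 * v2 - u2 * v1) * b2" .
      show ?thesis using e 1 2 by (simp add: Bf vadd_def sc_def)
    qed
  qed
  moreover have "sc r v = (0,0)" if rN: "sc r v \<in> N" for r
  proof -
    obtain s where s: "sc r v = sc s b" using rN unfolding N_def by blast
    have "B (sc r v) b = r * B v b" by (simp add: Bf sc_def algebra_simps)
    hence "B (sc r v) b = r" using h by simp
    moreover have "B (sc s b) b = 0" by (simp add: Bf sc_def algebra_simps)
    ultimately have "r = 0" using s by simp
    thus ?thesis by (simp add: sc_def)
  qed
  ultimately show ?thesis unfolding basis_vec_def by blast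
qed
theorem lemma4p1:
  fixes B :: "'a::comm_ring_1 vec \<Rightarrow> 'a vec \<Rightarrow> 'a"
    and C :: "'a vec \<Rightarrow> 'a vec"
    and G :: "('a vec \<Rightarrow> 'a vec) set"
    and x y z :: "'a vec" and w :: nat
  assumes "symplectic B"
    and "lin C" and "C \<circ> C = id" and "det2 C = -1"
    and "G \<subseteq> SL" and "is_subgroup G" and "vneg \<in> G"
    and "\<forall>g\<in>G. C \<circ> g \<circ> C \<in> G"
    and "geodesic B C G (x, y, z, w)"
  shows "geodesic B C G (rho (x, y, z, w)) \<longleftrightarrow>
    (\<exists>\<sigma>\<in>G. lin \<sigma> \<and> \<sigma> x = vneg y \<and> \<sigma> z = vsub z (sc (of_nat (3 - w)) y))"
proof -
  obtain c where Bf0: "\<forall>u v. B u v = c * (fst u * snd v - snd u * fst v)"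
    using sym_coord[OF assms(1)] by blast
  have Bf: "B u v = c * (fst u * snd v - snd u * fst v)" for u v using Bf0 by blast
  have CC: "C (C u) = u" for u using assms(3) by (metis comp_apply id_apply)
  have Glin: "lin f" if "f \<in> G" for f using assms(5) that unfolding SL_def by blast
  have Gcomp: "f \<circ> h \<in> G" if "f \<in> G" "h \<in> G" for f h
    using assms(6) that unfolding is_subgroup_def by blast
  have bx: "basis_vec x" and by': "basis_vec y" and bz: "basis_vec z"
    and Bxz: "B x z = 1" and Bzy: "B z y = 1" and w12: "w = 1 \<or> w = 2"
    and xy: "vadd x y = sc (of_nat w) z"
    using assms(9) unfolding geodesic_def in_T_def by auto
  define W :: 'a where "W = of_nat w"
  define W' :: 'a where "W' = of_nat (3 - w)"
  have W33: "(of_nat (3 - (3 - w)) :: 'a) = W" using w12 W_def by auto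
  obtain g where gG: "g \<in> G" and
    g1: "\<And>u. vsub (C (g u)) u = sc (W' * B u x) y" and
    g2: "\<And>u. vadd (C (g u)) u = sc (W' * B u y) x"
    using assms(9) unfolding geodesic_def cond_c_def W'_def by auto
  have Tg: "C (g u) = vadd u (sc (W' * B u x) y)" for u
    using g1[of u] by (cases "C (g u)") (auto simp: vsub_def vadd_def sc_def diff_eq_eq add.commute)
  have yW: "y = vsub (sc W z) x" using xy W_def
    by (cases x, cases y) (auto simp: vsub_def vadd_def sc_def algebra_simps)
  have Bl: "B (vadd a b) v = B a v + B b v" "B (vsub a b) v = B a v - B b v"
     "B (sc r a) v = r * B a v" "B (vneg a) v = - B a v"
     "B v (vadd a b) = B v a + B v b" "B v (vsub a b) = B v a - B v b"
     "B v (sc r a) = r * B v a" "B v (vneg a) = - B v a" "B a a = 0" for a b v r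
    by (simp_all add: Bf vadd_def vsub_def sc_def vneg_def algebra_simps)
  have Bzx: "B z x = -1" using Bxz by (simp add: Bf algebra_simps)
  have Byx: "B y x = - W" using Bzx by (simp add: yW Bl)
  have Bxy: "B x y = W" using Bxz by (simp add: yW Bl)
  have Bzy': "B z y = 1" by (rule Bzy)
  have Byz: "B y z = -1" using Bzy by (simp add: Bf algebra_simps)
  have WW: "W * W' = 2" using w12 by (auto simp: W_def W'_def)
  have dec: "u = vadd (sc (B u z) x) (sc (- B u x) z)" for u
  proof (cases u, cases x, cases z)
    fix u1 u2 v1 v2 b1 b2 assume e: "u = (u1,u2)" "x = (v1,v2)" "z = (b1,b2)"
    have hc': "c * (v1 * b2 - v2 * b1) = 1" using Bxz e by (simp add: Bf)
    have "u1 = u1 * (c * (v1 * b2 - v2 * b1))" using hc' by simp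
    also have "\<dots> = c * (u1 * b2 - u2 * b1) * v1 - c * (u1 * v2 - u2 * v1) * b1"
      by (simp add: algebra_simps)
    finally have 1: "u1 = c * (u1 * b2 - u2 * b1) * v1 - c * (u1 * v2 - u2 * v1) * b1" .
    have "u2 = u2 * (c * (v1 * b2 - v2 * b1))" using hc' by simp
    also have "\<dots> = c * (u1 * b2 - u2 * b1) * v2 - c * (u1 * v2 - u2 * v1) * b2"
      by (simp add: algebra_simps)
    finally have 2: "u2 = c * (u1 * b2 - u2 * b1) * v2 - c * (u1 * v2 - u2 * v1) * b2" .
    show ?thesis using e 1 2 by (simp add: Bf vadd_def sc_def)
  qed
  have rho_eq: "rho (x, y, z, w) = (z, vsub z (sc W' x), y, 3 - w)"
    by (simp add: rho_def W'_def)
  show ?thesis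
  proof
    assume "geodesic B C G (rho (x, y, z, w))"
    hence "cond_c B C G (z, vsub z (sc W' x), y, 3 - w)" unfolding geodesic_def rho_eq by blast
    hence "\<exists>g\<in>G. \<forall>u. vsub (C (g u)) u = sc (W * B u z) (vsub z (sc W' x))"
      unfolding cond_c_def prod.case W33 by blast
    then obtain g' where g'G: "g' \<in> G" and
      h1: "\<And>u. vsub (C (g' u)) u = sc (W * B u z) (vsub z (sc W' x))"
      by blast
    have Tg': "C (g' u) = vadd u (sc (W * B u z) (vsub z (sc W' x)))" for u
      using h1[of u] by (cases "C (g' u)") (auto simp: vsub_def vadd_def sc_def diff_eq_eq add.commute)
    define \<sigma> where "\<sigma> = (C \<circ> g \<circ> C) \<circ> g'"
    have sG: "\<sigma> \<in> G" unfolding \<sigma>_def using Gcomp assms(8) gG g'G by blast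
    have "C (g' x) = y" unfolding Tg' Bxz using w12 yW
      by (cases x, cases z) (auto simp: W_def W'_def vadd_def vsub_def sc_def algebra_simps)
    hence sx: "\<sigma> x = vneg y" unfolding \<sigma>_def using Byx w12
      by (cases y) (auto simp: Tg W_def W'_def vadd_def vneg_def sc_def algebra_simps)
    have "C (g' z) = z" unfolding Tg' Bl by (simp add: vadd_def sc_def)
    hence sz: "\<sigma> z = vsub z (sc (of_nat (3 - w)) y)" unfolding \<sigma>_def using Bzx
      by (cases y, cases z) (auto simp: Tg W'_def vadd_def vsub_def sc_def algebra_simps)
    show "\<exists>\<sigma>\<in>G. lin \<sigma> \<and> \<sigma> x = vneg y \<and> \<sigma> z = vsub z (sc (of_nat (3 - w)) y)"
      using sG Glin sx sz by blast
  next
    assume "\<exists>\<sigma>\<in>G. lin \<sigma> \<and> \<sigma> x = vneg y \<and> \<sigma> z = vsub z (sc (of_nat (3 - w)) y)"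
    then obtain \<sigma> where sG: "\<sigma> \<in> G" and sl: "lin \<sigma>" and sx: "\<sigma> x = vneg y"
      and sz: "\<sigma> z = vsub z (sc W' y)" unfolding W'_def by blast
    have inT: "in_T B (rho (x, y, z, w))"
    proof -
      have "B (vsub z (sc W' x)) (vneg y) = 1" using w12 Bzy Bxy Byz Byx
        by (simp add: Bl W_def W'_def) (auto simp: algebra_simps)
      hence "basis_vec (vsub z (sc W' x))" by (rule basis_from_pair[OF Bf])
      moreover have "B y (vsub z (sc W' x)) = 1" using w12 Bzy Bxy Byz Byx
        by (simp add: Bl W_def W'_def) (auto simp: algebra_simps)
      moreover have "vadd z (vsub z (sc W' x)) = sc W' y" using w12 yW
        by (cases x, cases z) (auto simp: W_def W'_def vadd_def vsub_def sc_def algebra_simps)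
      ultimately show ?thesis unfolding in_T_def rho_eq using bz by' Bzy w12
        by (auto simp: W'_def)
    qed
    have "cond_c B C G (rho (x, y, z, w))"
      unfolding cond_c_def rho_eq W33 prod.case
    proof (intro bexI[of _ "g \<circ> \<sigma>"] allI conjI)
      show "g \<circ> \<sigma> \<in> G" using Gcomp gG sG by blast
    next
      fix u
      define p q where "p = B u z" and "q = B u x"
      have su: "\<sigma> u = vadd (sc p (vneg y)) (sc (- q) (vsub z (sc W' y)))"
        using lin_decomp[OF sl dec[of u]] sx sz p_def q_def by simp
      have Bsx: "B (\<sigma> u) x = p * W - q" using WW unfolding su
        by (simp add: Bl Byx Bzx algebra_simps)
      have Tsu: "C ((g \<circ> \<sigma>) u) = vadd (\<sigma> u) (sc (W' * (p * W - q)) y)"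
        using Tg Bsx by simp
      have ud: "u = vadd (sc p x) (sc (- q) z)" using dec[of u] p_def q_def by simp
      have Buz: "B u (vsub z (sc W' x)) = p - W' * q" unfolding p_def q_def by (simp add: Bl)
      show "vsub (C ((g \<circ> \<sigma>) u)) u = sc (W * B u z) (vsub z (sc W' x))"
        unfolding Tsu su p_def[symmetric] using w12 yW ud
        by (cases x, cases z) (auto simp: W_def W'_def vadd_def vsub_def vneg_def sc_def algebra_simps)
      show "vadd (C ((g \<circ> \<sigma>) u)) u = sc (W * B u (vsub z (sc W' x))) z"
        unfolding Tsu su Buz using w12 yW ud
        by (cases x, cases z) (auto simp: W_def W'_def vadd_def vsub_def vneg_def sc_def algebra_simps)
    qed
    thus "geodesic B C G (rho (x, y, z, w))" using inT unfolding geodesic_def by blast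
  qed
qed
end
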